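(* Let $Z=\{Z_t:t\ge 0\}$ be a (continuous) fractional Brownian motion with Hurst parameter $H\in(0,1)$, let $\alpha>0$, and put $a_t:=H\,\mathrm{e}^{\alpha t/H}/\alpha$ for $t\in\mathbf{R}$. Define $X^{(D,\alpha)}_t:=\mathrm{e}^{-\alpha t}Z_{a_t}$, $t\in\mathbf{R}$. Then the stationary process $\{X^{(D,\alpha)}_t:t\in\mathbf{R}\}$ is short range dependent for every $H\in(0,1)$, i.e. with $\rho(n):=\mathbf{E}(X^{(D,\alpha)}_iX^{(D,\alpha)}_{i+n})$ (independent of $i$) the limit $\lim_{k\to\infty}\sum_{n=0}^k\rho(n)$ exists.
   Context: A fractional Brownian motion (FBM) with Hurst parameter $H\in(0,1)$ is a centered Gaussian process $Z=\{Z_t:t\ge0\}$ with covariance $\mathbf{E}(Z_tZ_s)=\frac12(t^{2H}+s^{2H}-|t-s|^{2H})$; a continuous version is taken. A stationary second order mean-zero sequence $X=\{X_n\}$ with $\rho_X(n)=\mathbf{E}(X_iX_{i+n})$ is called short range dependent if $\lim_{k\to\infty}\sum_{n=0}^k\rho_X(n)$ exists. *)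

theory Defs
  imports "HOL-Probability.Probability"
begin

definition gaussian_rv :: "'a measure \<Rightarrow> ('a \<Rightarrow> real) \<Rightarrow> bool" where
  "gaussian_rv M X \<longleftrightarrow> X \<in> borel_measurable M \<and>
     (\<exists>\<mu> \<sigma>. (\<sigma> > 0 \<and> distributed M lborel X (normal_density \<mu> \<sigma>))
            \<or> distr M borel X = return borel \<mu>)"

text \<open>Fractional Brownian motion with Hurst parameter H, indexed by t \<ge> 0
  (values of Z at negative times are irrelevant): a centered Gaussian process
  (all finite linear combinations Gaussian) with the fBm covariance and
  continuous sample paths.\<close>
definition is_fbm :: "'a measure \<Rightarrow> real \<Rightarrow> (real \<Rightarrow> 'a \<Rightarrow> real) \<Rightarrow> bool" where
  "is_fbm M H Z \<longleftrightarrow> prob_space M \<and> 0 < H \<and> H < 1 \<and>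
     (\<forall>t\<ge>0. Z t \<in> borel_measurable M) \<and>
     (\<forall>T (c::real \<Rightarrow> real). finite T \<and> T \<subseteq> {0..} \<longrightarrow>
         gaussian_rv M (\<lambda>\<omega>. \<Sum>t\<in>T. c t * Z t \<omega>)) \<and>
     (\<forall>t\<ge>0. integral\<^sup>L M (Z t) = 0) \<and>
     (\<forall>t\<ge>0. \<forall>s\<ge>0. integral\<^sup>L M (\<lambda>\<omega>. Z t \<omega> * Z s \<omega>) =
         (t powr (2*H) + s powr (2*H) - \<bar>t - s\<bar> powr (2*H)) / 2) \<and>
     (\<forall>\<omega>\<in>space M. continuous_on {0..} (\<lambda>t. Z t \<omega>))"

end

theory Submission
  imports Defs
begin

lemma powr_bound_aux:
  fixes u p :: real
  assumes "0 \<le> u" "u \<le> 1" "0 < p" "p \<le> 2"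
  shows "0 \<le> 1 - (1 - u) powr p \<and> 1 - (1 - u) powr p \<le> 2 * u"
proof -
  have "(1 - u) powr 2 \<le> (1 - u) powr p" using assms by (intro powr_mono') auto
  moreover have "(1 - u) powr 2 = (1-u)^2" using assms by (simp add: powr_realpow')
  moreover have "(1 - u) powr p \<le> 1"
  proof (cases "u = 1")
    case False
    hence "(1 - u) powr p \<le> (1 - u) powr 0" using assms by (intro powr_mono') auto
    thus ?thesis using False by simp
  qed simp
  moreover have "(1-u)^2 \<ge> 1 - 2*u" using assms by (simp add: power2_eq_square algebra_simps)
  ultimately show ?thesis by linarith
qed

lemma summable_exp_neg:
  fixes b :: real assumes "b > 0"
  shows "summable (\<lambda>n::nat. exp (- b * real n))"
proof -
  have "(\<lambda>n::nat. exp (- b * real n)) = (\<lambda>n. exp (- b) ^ n)"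
    by (simp add: exp_of_nat_mult[symmetric] mult.commute)
  moreover have "summable (\<lambda>n. exp (- b) ^ n)"
    using assms by (intro summable_geometric) simp
  ultimately show ?thesis by simp
qed

theorem proposition3p1:
  fixes M :: "'a measure" and H \<alpha> :: real and Z :: "real \<Rightarrow> 'a \<Rightarrow> real"
    and a :: "real \<Rightarrow> real" and X :: "real \<Rightarrow> 'a \<Rightarrow> real"
  assumes fbm: "is_fbm M H Z"
    and alpha: "\<alpha> > 0"
    and a_def: "\<And>t. a t = H * exp (\<alpha> * t / H) / \<alpha>"
    and X_def: "\<And>t \<omega>. X t \<omega> = exp (- \<alpha> * t) * Z (a t) \<omega>"
  shows "(\<forall>(i::real) (n::nat). integral\<^sup>L M (\<lambda>\<omega>. X i \<omega> * X (i + real n) \<omega>)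
                             = integral\<^sup>L M (\<lambda>\<omega>. X 0 \<omega> * X (real n) \<omega>))
         \<and> convergent (\<lambda>k. \<Sum>n\<le>k. integral\<^sup>L M (\<lambda>\<omega>. X 0 \<omega> * X (real n) \<omega>))"
proof -
  have H: "0 < H" "H < 1" using fbm unfolding is_fbm_def by auto
  have cov: "\<And>t s. t \<ge> 0 \<Longrightarrow> s \<ge> 0 \<Longrightarrow> integral\<^sup>L M (\<lambda>\<omega>. Z t \<omega> * Z s \<omega>) =
         (t powr (2*H) + s powr (2*H) - \<bar>t - s\<bar> powr (2*H)) / 2"
    using fbm unfolding is_fbm_def by auto
  define c where "c = H / \<alpha>"
  have c: "c > 0" using H alpha by (simp add: c_def)
  define g where "g = (\<lambda>n::nat. exp (- \<alpha> * n) + exp (\<alpha> * n)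
        - exp (- \<alpha> * n) * (exp (\<alpha> * n / H) - 1) powr (2*H))"
  have key: "integral\<^sup>L M (\<lambda>\<omega>. X i \<omega> * X (i + real n) \<omega>) = c powr (2*H) / 2 * g n"
    for i :: real and n :: nat
  proof -
    define s where "s = i + real n"
    have at: "a t = c * exp (\<alpha> * t / H)" for t using a_def c_def by simp
    have ap: "a t powr (2*H) = c powr (2*H) * exp (2 * \<alpha> * t)" for t
      using c H by (simp add: at powr_mult exp_powr_real)
    have diff: "\<bar>a s - a i\<bar> = c * exp (\<alpha> * i / H) * (exp (\<alpha> * n / H) - 1)"
    proof -
      have "a s - a i = c * exp (\<alpha> * i / H) * (exp (\<alpha> * n / H) - 1)"
        unfolding at s_def by (simp add: algebra_simps add_divide_distrib exp_add)
      moreover have "exp (\<alpha> * n / H) \<ge> 1" using alpha H by simp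
      ultimately show ?thesis using c by simp
    qed
    have dp: "\<bar>a s - a i\<bar> powr (2*H) = c powr (2*H) * exp (2 * \<alpha> * i) * (exp (\<alpha> * n / H) - 1) powr (2*H)"
      unfolding diff using c H by (simp add: powr_mult exp_powr_real)
    have apos: "a t \<ge> 0" for t using at c by simp
    have "integral\<^sup>L M (\<lambda>\<omega>. X i \<omega> * X s \<omega>) = exp (- \<alpha> * i) * exp (- \<alpha> * s) * integral\<^sup>L M (\<lambda>\<omega>. Z (a i) \<omega> * Z (a s) \<omega>)"
    proof -
      have "(\<lambda>\<omega>. X i \<omega> * X s \<omega>) = (\<lambda>\<omega>. (exp (- \<alpha> * i) * exp (- \<alpha> * s)) * (Z (a i) \<omega> * Z (a s) \<omega>))"
        unfolding X_def by (simp add: fun_eq_iff ac_simps)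
      thus ?thesis by (simp only: integral_mult_right_zero)
    qed
    also have "\<dots> = exp (- \<alpha> * i) * exp (- \<alpha> * s) * ((a i powr (2*H) + a s powr (2*H) - \<bar>a i - a s\<bar> powr (2*H)) / 2)"
      using cov apos by simp
    also have "\<bar>a i - a s\<bar> = \<bar>a s - a i\<bar>" by simp
    also have "exp (- \<alpha> * i) * exp (- \<alpha> * s) * ((a i powr (2*H) + a s powr (2*H) - \<bar>a s - a i\<bar> powr (2*H)) / 2)
       = c powr (2*H) / 2 * g n"
    proof -
      have e1: "exp (- \<alpha> * i) * exp (- \<alpha> * s) * exp (2 * \<alpha> * i) = exp (- \<alpha> * n)"
        unfolding s_def by (simp add: exp_add[symmetric] algebra_simps)
      have e2: "exp (- \<alpha> * i) * exp (- \<alpha> * s) * exp (2 * \<alpha> * s) = exp (\<alpha> * n)"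
        unfolding s_def by (simp add: exp_add[symmetric] algebra_simps)
      define K where "K = exp (- \<alpha> * i) * exp (- \<alpha> * s)"
      define D where "D = (exp (\<alpha> * n / H) - 1) powr (2*H)"
      define A where "A = exp (2 * \<alpha> * i)"
      define B where "B = exp (2 * \<alpha> * s)"
      have "K * ((c powr (2*H) * A + c powr (2*H) * B - c powr (2*H) * A * D) / 2)
          = c powr (2*H) / 2 * (K * A + K * B - K * A * D)" by (simp add: field_simps)
      also have "\<dots> = c powr (2*H) / 2 * g n"
        using e1 e2 unfolding g_def K_def A_def B_def D_def by simp
      finally show ?thesis unfolding ap dp K_def A_def B_def D_def .
    qed
    finally show ?thesis unfolding s_def .
  qed
  have part1: "\<forall>(i::real) (n::nat). integral\<^sup>L M (\<lambda>\<omega>. X i \<omega> * X (i + real n) \<omega>)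
                             = integral\<^sup>L M (\<lambda>\<omega>. X 0 \<omega> * X (real n) \<omega>)"
    using key[of _ 0] key by (metis add_0)
  have gb: "norm (g n) \<le> exp (- \<alpha> * n) + 2 * exp (- (\<alpha> * (1/H - 1)) * n)" for n :: nat
  proof -
    define u where "u = exp (- (\<alpha> * n / H))"
    have u: "0 \<le> u" "u \<le> 1" using alpha H by (auto simp: u_def)
    have "exp (\<alpha> * n / H) - 1 = exp (\<alpha> * n / H) * (1 - u)"
      by (simp add: u_def algebra_simps exp_minus)
    hence "(exp (\<alpha> * n / H) - 1) powr (2*H) = exp (2 * \<alpha> * n) * (1 - u) powr (2*H)"
      using u H by (simp add: powr_mult exp_powr_real)
    hence gn: "g n = exp (- \<alpha> * n) + exp (\<alpha> * n) * (1 - (1 - u) powr (2*H))"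
      unfolding g_def by (simp add: algebra_simps exp_add[symmetric])
    have b: "0 \<le> 1 - (1 - u) powr (2*H)" "1 - (1 - u) powr (2*H) \<le> 2 * u"
      using powr_bound_aux[OF u, of "2*H"] H by auto
    have "0 \<le> exp (\<alpha> * n) * (1 - (1 - u) powr (2*H))" using b by simp
    moreover have "exp (\<alpha> * n) * (1 - (1 - u) powr (2*H)) \<le> exp (\<alpha> * n) * (2 * u)"
      using b by (intro mult_left_mono) auto
    moreover have "exp (\<alpha> * n) * (2 * u) = 2 * exp (- (\<alpha> * (1/H - 1)) * n)"
      unfolding u_def by (simp add: exp_add[symmetric] algebra_simps diff_divide_distrib)
    ultimately show ?thesis unfolding gn by simp
  qed
  have "summable (\<lambda>n::nat. exp (- \<alpha> * n) + 2 * exp (- (\<alpha> * (1/H - 1)) * n))"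
  proof (intro summable_add summable_mult summable_exp_neg)
    show "0 < \<alpha>" by fact
    show "0 < \<alpha> * (1/H - 1)" using alpha H by (simp add: field_simps)
  qed
  hence "summable g" by (rule summable_comparison_test'[where N=0]) (use gb in auto)
  hence "summable (\<lambda>n. c powr (2*H) / 2 * g n)" by (rule summable_mult)
  hence "convergent (\<lambda>k. \<Sum>n\<le>k. c powr (2*H) / 2 * g n)"
    using summable_LIMSEQ' convergent_def by blast
  moreover have "(\<lambda>k. \<Sum>n\<le>k. integral\<^sup>L M (\<lambda>\<omega>. X 0 \<omega> * X (real n) \<omega>)) = (\<lambda>k. \<Sum>n\<le>k. c powr (2*H) / 2 * g n)"
  proof -
    have "\<And>n. integral\<^sup>L M (\<lambda>\<omega>. X 0 \<omega> * X (real n) \<omega>) = c powr (2*H) / 2 * g n"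
      using key[of 0] by (metis add_0)
    thus ?thesis by presburger
  qed
  ultimately show ?thesis using part1 by simp
qed

end
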